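(* In the Sinkhorn setting described in the context, for all integers $t\ge0$, $$H(\pi_*|\pi_{2t+2})-H(\pi_*|\pi_{2t})=-\big[H(\mu|\mu_{2t})+H(\nu|\nu_{2t+1})\big]\le-\big[H(\mu_{2t+2}|\mu)+H(\mu|\mu_{2t+2})\big]\le-H(\mu_{2t+2}|\mu).$$
   Context: Sinkhorn setting: $(\mathsf{X},\mu)$, $(\mathsf{Y},\nu)$ are Polish probability spaces, $c:\mathsf{X}\times\mathsf{Y}\to\mathbb{R}$ is measurable, $e^{-c}\in L^1(\mu\otimes\nu)$, and $\mathcal{C}_1(\mu,\nu):=\inf_{\pi\in\Pi(\mu,\nu)}\int c\,d\pi+H(\pi|\mu\otimes\nu)$ is finite, where $\Pi(\mu,\nu)$ is the set of couplings and $H(\rho|\sigma)=\int\log\frac{d\rho}{d\sigma}d\rho$ if $\rho\ll\sigma$, $+\infty$ otherwise. $\pi_*$ is the unique minimizer; $d\pi_*=e^{\varphi_*\oplus\psi_*-c}d(\mu\otimes\nu)$ with potentials $\varphi_*,\psi_*$ (unique up to $(\varphi_*-a,\psi_*+a)$), $(\varphi\oplus\psi)(x,y)=\varphi(x)+\psi(y)$. Let $\xi=\int e^{-c}d(\mu\otimes\nu)$ and $dR=\xi^{-1}e^{-c}d(\mu\otimes\nu)$. Sinkhorn iterates: $\varphi_0:=0$, and for $t\ge0$, $\psi_t(y):=-\log\int e^{\varphi_t(x)-c(x,y)}\mu(dx)$, $\varphi_{t+1}(x):=-\log\int e^{\psi_t(y)-c(x,y)}\nu(dy)$; set $\psi_{-1}:=-\log\xi$.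 Define probability measures $d\pi_{2t}=e^{\varphi_t\oplus\psi_t-c}d(\mu\otimes\nu)$ and $d\pi_{2t-1}=e^{\varphi_t\oplus\psi_{t-1}-c}d(\mu\otimes\nu)$ for $t\ge0$ (so $\pi_{-1}=R$). Then $\pi_{2t}$ has marginals $(\mu_{2t},\nu)$ and $\pi_{2t-1}$ has marginals $(\mu,\nu_{2t-1})$, with $d\mu_{2t}/d\mu=e^{\varphi_t-\varphi_{t+1}}$ and $d\nu_{2t-1}/d\nu=e^{\psi_{t-1}-\psi_t}$. *)

theory Defs
  imports "HOL-Probability.Probability"
begin

definition rel_entropy :: "'a measure \<Rightarrow> 'a measure \<Rightarrow> ereal" where
  "rel_entropy \<rho> \<sigma> =
    (if sets \<rho> = sets \<sigma> \<and> absolutely_continuous \<sigma> \<rho> then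
       (let f = (\<lambda>x. enn2real (RN_deriv \<sigma> \<rho> x)) in
         enn2ereal (\<integral>\<^sup>+ x. ennreal (max 0 (ln (f x))) \<partial>\<rho>)
         - enn2ereal (\<integral>\<^sup>+ x. ennreal (max 0 (- ln (f x))) \<partial>\<rho>))
     else \<infinity>)"

definition couplings :: "'a measure \<Rightarrow> 'b measure \<Rightarrow> ('a \<times> 'b) measure set" where
  "couplings \<mu> \<nu> = {\<pi>. sets \<pi> = sets (\<mu> \<Otimes>\<^sub>M \<nu>) \<and> prob_space \<pi>
      \<and> distr \<pi> \<mu> fst = \<mu> \<and> distr \<pi> \<nu> snd = \<nu>}"

definition entropic_cost ::
  "'a measure \<Rightarrow> 'b measure \<Rightarrow> ('a \<times> 'b \<Rightarrow> real) \<Rightarrow> ('a \<times> 'b) measure \<Rightarrow> ereal" where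
  "entropic_cost \<mu> \<nu> c \<pi> =
     enn2ereal (\<integral>\<^sup>+ z. ennreal (max 0 (c z)) \<partial>\<pi>)
     - enn2ereal (\<integral>\<^sup>+ z. ennreal (max 0 (- c z)) \<partial>\<pi>)
     + rel_entropy \<pi> (\<mu> \<Otimes>\<^sub>M \<nu>)"

definition sk_psi_of :: "'a measure \<Rightarrow> ('a \<times> 'b \<Rightarrow> real) \<Rightarrow> ('a \<Rightarrow> real) \<Rightarrow> 'b \<Rightarrow> real" where
  "sk_psi_of \<mu> c \<phi> y = - ln (enn2real (\<integral>\<^sup>+ x. ennreal (exp (\<phi> x - c (x, y))) \<partial>\<mu>))"

fun sk_phi :: "'a measure \<Rightarrow> 'b measure \<Rightarrow> ('a \<times> 'b \<Rightarrow> real) \<Rightarrow> nat \<Rightarrow> 'a \<Rightarrow> real" where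
  "sk_phi \<mu> \<nu> c 0 = (\<lambda>x. 0)"
| "sk_phi \<mu> \<nu> c (Suc t) = (\<lambda>x. - ln (enn2real (\<integral>\<^sup>+ y.
        ennreal (exp (sk_psi_of \<mu> c (sk_phi \<mu> \<nu> c t) y - c (x, y))) \<partial>\<nu>)))"

definition sk_psi :: "'a measure \<Rightarrow> 'b measure \<Rightarrow> ('a \<times> 'b \<Rightarrow> real) \<Rightarrow> nat \<Rightarrow> 'b \<Rightarrow> real" where
  "sk_psi \<mu> \<nu> c t = sk_psi_of \<mu> c (sk_phi \<mu> \<nu> c t)"

text \<open>d pi_{2t} = exp(phi_t + psi_t - c) d(mu x nu)\<close>
definition sk_pi_even :: "'a measure \<Rightarrow> 'b measure \<Rightarrow> ('a \<times> 'b \<Rightarrow> real) \<Rightarrow> nat \<Rightarrow> ('a \<times> 'b) measure" where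
  "sk_pi_even \<mu> \<nu> c t = density (\<mu> \<Otimes>\<^sub>M \<nu>)
     (\<lambda>(x, y). ennreal (exp (sk_phi \<mu> \<nu> c t x + sk_psi \<mu> \<nu> c t y - c (x, y))))"

text \<open>d pi_{2t+1} = exp(phi_{t+1} + psi_t - c) d(mu x nu)\<close>
definition sk_pi_odd :: "'a measure \<Rightarrow> 'b measure \<Rightarrow> ('a \<times> 'b \<Rightarrow> real) \<Rightarrow> nat \<Rightarrow> ('a \<times> 'b) measure" where
  "sk_pi_odd \<mu> \<nu> c t = density (\<mu> \<Otimes>\<^sub>M \<nu>)
     (\<lambda>(x, y). ennreal (exp (sk_phi \<mu> \<nu> c (Suc t) x + sk_psi \<mu> \<nu> c t y - c (x, y))))"

text \<open>mu_{2t}: first marginal of pi_{2t}; nu_{2t+1}: second marginal of pi_{2t+1}.\<close>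
definition sk_mu_even :: "'a measure \<Rightarrow> 'b measure \<Rightarrow> ('a \<times> 'b \<Rightarrow> real) \<Rightarrow> nat \<Rightarrow> 'a measure" where
  "sk_mu_even \<mu> \<nu> c t = distr (sk_pi_even \<mu> \<nu> c t) \<mu> fst"

definition sk_nu_odd :: "'a measure \<Rightarrow> 'b measure \<Rightarrow> ('a \<times> 'b \<Rightarrow> real) \<Rightarrow> nat \<Rightarrow> 'b measure" where
  "sk_nu_odd \<mu> \<nu> c t = distr (sk_pi_odd \<mu> \<nu> c t) \<nu> snd"

end

theory Submission
  imports Defs
begin


lemma emax0: "ennreal (max 0 x) = ennreal x"
  by (simp add: max_def ennreal_neg)

definition Ient :: "'a measure \<Rightarrow> ('a \<Rightarrow> real) \<Rightarrow> ereal" where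
  "Ient P h = enn2ereal (\<integral>\<^sup>+x. ennreal (max 0 (h x)) \<partial>P) - enn2ereal (\<integral>\<^sup>+x. ennreal (max 0 (- h x)) \<partial>P)"

lemma Ient_cong_AE: "AE x in P. h x = g x \<Longrightarrow> Ient P h = Ient P g"
  unfolding Ient_def
  by (intro arg_cong2[where f="(-)"] arg_cong[where f=enn2ereal] nn_integral_cong_AE) auto

lemma enn2ereal_fin: "x \<noteq> top \<Longrightarrow> enn2ereal x = ereal (enn2real x)"
  by (cases x rule: ennreal_cases) auto

lemma Ient_integrable:
  assumes "integrable P h" shows "Ient P h = ereal (\<integral>x. h x \<partial>P)"
proof -
  have a: "(\<integral>\<^sup>+x. ennreal (h x) \<partial>P) \<noteq> top" "(\<integral>\<^sup>+x. ennreal (- h x) \<partial>P) \<noteq> top"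
    using assms unfolding real_integrable_def by (auto simp: less_top)
  show ?thesis
    unfolding Ient_def emax0 real_lebesgue_integral_def[OF assms] enn2ereal_fin[OF a(1)] enn2ereal_fin[OF a(2)]
    by simp
qed

lemma integrable_from_parts:
  assumes "h \<in> borel_measurable P" "(\<integral>\<^sup>+x. ennreal (max 0 (h x)) \<partial>P) < \<infinity>"
    "(\<integral>\<^sup>+x. ennreal (max 0 (- h x)) \<partial>P) < \<infinity>"
  shows "integrable P h"
  using assms unfolding real_integrable_def emax0 by auto


lemma Ient_top: "(\<integral>\<^sup>+x. ennreal (max 0 (h x)) \<partial>P) = \<infinity> \<Longrightarrow> Ient P h = \<infinity>"
  unfolding Ient_def by simp

lemma Ient_bot: "(\<integral>\<^sup>+x. ennreal (max 0 (h x)) \<partial>P) < \<infinity> \<Longrightarrow>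
   (\<integral>\<^sup>+x. ennreal (max 0 (- h x)) \<partial>P) = \<infinity> \<Longrightarrow> Ient P h = -\<infinity>"
  unfolding Ient_def by (cases "(\<integral>\<^sup>+x. ennreal (max 0 (h x)) \<partial>P)") (auto simp: less_top)

lemma max0_le: assumes "u \<le> v + k" shows "ennreal (max 0 u) \<le> ennreal (max 0 v) + ennreal (max 0 k)"
proof -
  have "max 0 u \<le> max 0 v + max 0 k" using assms by (simp add: max_def)
  then have "ennreal (max 0 u) \<le> ennreal (max 0 v + max 0 k)" by (rule ennreal_leI)
  also have "ennreal (max 0 v + max 0 k) = ennreal (max 0 v) + ennreal (max 0 k)" by (rule ennreal_plus) auto
  finally show ?thesis .
qed

lemma Ient_gibbs:
  assumes P: "prob_space P" and u[measurable]: "u \<in> borel_measurable P" and v[measurable]: "v \<in> borel_measurable P"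
    and e: "(\<integral>\<^sup>+x. ennreal (exp (u x - v x)) \<partial>P) \<le> 1"
  shows "Ient P u \<le> Ient P v"
proof -
  interpret prob_space P by fact
  define k where "k x = exp (u x - v x) - 1" for x
  have k[measurable]: "k \<in> borel_measurable P" unfolding k_def by measurable
  have ie: "integrable P (\<lambda>x. exp (u x - v x))"
    using e by (intro integrableI_nonneg) (auto intro!: le_less_trans[OF e])
  have ik: "integrable P k" unfolding k_def using ie by simp
  have "(\<integral>x. exp (u x - v x) \<partial>P) = enn2real (\<integral>\<^sup>+x. ennreal (exp (u x - v x)) \<partial>P)"
    by (rule integral_eq_nn_integral) (use ie in auto)
  also have "\<dots> \<le> 1" using enn2real_mono[OF e] by simp
  finally have ile1: "(\<integral>x. exp (u x - v x) \<partial>P) \<le> 1" .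
  have ile: "(\<integral>x. k x \<partial>P) \<le> 0"
  proof -
    have "(\<integral>x. k x \<partial>P) = (\<integral>x. exp (u x - v x) \<partial>P) - (\<integral>x. 1 \<partial>P)"
      unfolding k_def by (rule Bochner_Integration.integral_diff[OF ie]) simp
    then show ?thesis using ile1 by (simp add: prob_space)
  qed
  have pw: "u x \<le> v x + k x" for x
    using exp_ge_add_one_self[of "u x - v x"] unfolding k_def by linarith
  have pw2: "- v x \<le> - u x + k x" for x using pw[of x] by linarith
  have kp: "(\<integral>\<^sup>+x. ennreal (max 0 (k x)) \<partial>P) < \<infinity>"
    using ik unfolding real_integrable_def emax0 by (auto simp: less_top)
  show ?thesis
  proof (cases "(\<integral>\<^sup>+x. ennreal (max 0 (v x)) \<partial>P) = \<infinity>")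
    case True then show ?thesis by (simp add: Ient_top)
  next
    case vp: False
    have up: "(\<integral>\<^sup>+x. ennreal (max 0 (u x)) \<partial>P) < \<infinity>"
    proof -
      have "(\<integral>\<^sup>+x. ennreal (max 0 (u x)) \<partial>P) \<le> (\<integral>\<^sup>+x. ennreal (max 0 (v x)) + ennreal (max 0 (k x)) \<partial>P)"
        by (intro nn_integral_mono max0_le pw)
      also have "\<dots> = (\<integral>\<^sup>+x. ennreal (max 0 (v x)) \<partial>P) + (\<integral>\<^sup>+x. ennreal (max 0 (k x)) \<partial>P)"
        by (rule nn_integral_add) auto
      also have "\<dots> < \<infinity>" using vp kp by (simp add: less_top)
      finally show ?thesis .
    qed
    show ?thesis
    proof (cases "(\<integral>\<^sup>+x. ennreal (max 0 (- u x)) \<partial>P) = \<infinity>")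
      case True then show ?thesis using up by (simp add: Ient_bot)
    next
      case un: False
      have iu: "integrable P u" using up un by (intro integrable_from_parts) (auto simp: less_top)
      have vn: "(\<integral>\<^sup>+x. ennreal (max 0 (- v x)) \<partial>P) < \<infinity>"
      proof -
        have "(\<integral>\<^sup>+x. ennreal (max 0 (- v x)) \<partial>P) \<le> (\<integral>\<^sup>+x. ennreal (max 0 (- u x)) + ennreal (max 0 (k x)) \<partial>P)"
          by (intro nn_integral_mono max0_le pw2)
        also have "\<dots> = (\<integral>\<^sup>+x. ennreal (max 0 (- u x)) \<partial>P) + (\<integral>\<^sup>+x. ennreal (max 0 (k x)) \<partial>P)"
          by (rule nn_integral_add) auto
        also have "\<dots> < \<infinity>" using un kp by (simp add: less_top)
        finally show ?thesis .
      qed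
      have iv: "integrable P v" using vp vn by (intro integrable_from_parts) (auto simp: less_top)
      have "(\<integral>x. u x \<partial>P) \<le> (\<integral>x. v x + k x \<partial>P)"
        by (intro integral_mono iu pw Bochner_Integration.integrable_add iv ik)
      also have "\<dots> = (\<integral>x. v x \<partial>P) + (\<integral>x. k x \<partial>P)" by (rule Bochner_Integration.integral_add[OF iv ik])
      also have "\<dots> \<le> (\<integral>x. v x \<partial>P)" using ile by linarith
      finally have "(\<integral>x. u x \<partial>P) \<le> (\<integral>x. v x \<partial>P)" .
      then show ?thesis unfolding Ient_integrable[OF iu] Ient_integrable[OF iv] by simp
    qed
  qed
qed

lemma ennreal_pos_fin_exp:
  assumes "r \<noteq> 0" "r \<noteq> \<top>"
  shows "r * ennreal (exp a) = ennreal (exp (a - (- ln (enn2real r))))"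
proof -
  obtain s where s: "r = ennreal s" "0 \<le> s" using assms(2) by (cases r) auto
  have "s > 0" using s assms(1) by (auto simp: less_le)
  then have "exp (a - (- ln (enn2real r))) = s * exp a" using s by (simp add: exp_add)
  then show ?thesis using s \<open>s > 0\<close> by (simp add: ennreal_mult)
qed

lemma ennreal_pos_fin_inv:
  assumes "r \<noteq> 0" "r \<noteq> \<top>"
  shows "r * ennreal (exp (- ln (enn2real r))) = 1"
  using ennreal_pos_fin_exp[OF assms, of "- ln (enn2real r)"] by simp

lemma rel_entropy_eq: "sets \<rho> = sets \<sigma> \<Longrightarrow> absolutely_continuous \<sigma> \<rho> \<Longrightarrow>
  rel_entropy \<rho> \<sigma> = Ient \<rho> (\<lambda>x. ln (enn2real (RN_deriv \<sigma> \<rho> x)))"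
  unfolding rel_entropy_def Ient_def Let_def by (rule if_P) blast

lemma rel_entropy_density:
  assumes p[measurable]: "p \<in> borel_measurable N" and q[measurable]: "q \<in> borel_measurable N"
    and ppos: "\<And>x. x \<in> space N \<Longrightarrow> p x > 0" and qnn: "\<And>x. x \<in> space N \<Longrightarrow> q x \<ge> 0"
    and fin: "finite_measure (density N (\<lambda>x. ennreal (p x)))"
  shows "rel_entropy (density N (\<lambda>x. ennreal (q x))) (density N (\<lambda>x. ennreal (p x)))
        = Ient (density N (\<lambda>x. ennreal (q x))) (\<lambda>x. ln (q x / p x))"
proof -
  let ?s = "density N (\<lambda>x. ennreal (p x))" and ?r = "density N (\<lambda>x. ennreal (q x))"
  interpret S: finite_measure ?s by fact
  have ac: "absolutely_continuous ?s ?r"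
    unfolding absolutely_continuous_def
  proof
    fix A assume "A \<in> null_sets ?s"
    then have A: "A \<in> sets N" "AE x in N. x \<in> A \<longrightarrow> ennreal (p x) = 0"
      by (auto simp: null_sets_density_iff)
    have "AE x in N. x \<in> A \<longrightarrow> ennreal (q x) = 0"
    proof (rule AE_mp[OF A(2)], rule AE_I2, rule impI)
      fix x assume "x \<in> space N" "x \<in> A \<longrightarrow> ennreal (p x) = 0"
      then show "x \<in> A \<longrightarrow> ennreal (q x) = 0" using ppos[of x] by (auto simp: ennreal_eq_0_iff)
    qed
    then show "A \<in> null_sets ?r" using A by (simp add: null_sets_density_iff)
  qed
  have pq: "x \<in> space N \<Longrightarrow> ennreal (p x) * ennreal (q x / p x) = ennreal (q x)" for x
    by (subst ennreal_mult[symmetric]) (use ppos[of x] qnn[of x] in auto)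
  have "density ?s (\<lambda>x. ennreal (q x / p x)) = density N (\<lambda>x. ennreal (p x) * ennreal (q x / p x))"
    by (rule density_density_eq) auto
  also have "\<dots> = ?r" by (rule density_cong) (auto intro!: AE_I2 simp: pq)
  finally have dens: "density ?s (\<lambda>x. ennreal (q x / p x)) = ?r" .
  have "AE x in ?s. ennreal (q x / p x) = RN_deriv ?s ?r x"
    by (rule S.RN_deriv_unique[OF _ dens]) simp
  then have ae: "AE x in ?r. ennreal (q x / p x) = RN_deriv ?s ?r x"
    by (rule absolutely_continuous_AE[OF _ ac, rotated]) simp
  have ae2: "AE x in ?r. ln (enn2real (RN_deriv ?s ?r x)) = ln (q x / p x)"
  proof (rule AE_mp[OF ae], rule AE_I2, rule impI)
    fix x assume x: "x \<in> space ?r" and e: "ennreal (q x / p x) = RN_deriv ?s ?r x"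
    have "q x / p x \<ge> 0" using ppos[of x] qnn[of x] x by simp
    then show "ln (enn2real (RN_deriv ?s ?r x)) = ln (q x / p x)" using e[symmetric] by simp
  qed
  have "rel_entropy ?r ?s = Ient ?r (\<lambda>x. ln (enn2real (RN_deriv ?s ?r x)))"
    by (rule rel_entropy_eq[OF _ ac]) simp
  also have "\<dots> = Ient ?r (\<lambda>x. ln (q x / p x))" by (rule Ient_cong_AE[OF ae2])
  finally show ?thesis .
qed


lemma ee1: "ennreal (exp (p + q - r)) * G = ennreal (exp (p - r)) * (ennreal (exp q) * G)"
proof -
  have "exp (p + q - r) = exp (p - r) * exp q" by (simp add: exp_add[symmetric])
  then have "ennreal (exp (p + q - r)) = ennreal (exp (p - r)) * ennreal (exp q)" by (simp add: ennreal_mult)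
  then show ?thesis by (simp add: mult.assoc)
qed

lemma ee2: "ennreal (exp (p + q - r)) * G = ennreal (exp (q - r)) * (ennreal (exp p) * G)"
  using ee1[of q p r G] by (simp add: add.commute)

lemma nn_pos:
  assumes "prob_space N" "f \<in> borel_measurable N" "\<And>x. f x > 0"
  shows "(\<integral>\<^sup>+x. ennreal (f x) \<partial>N) \<noteq> 0"
proof
  assume "(\<integral>\<^sup>+x. ennreal (f x) \<partial>N) = 0"
  then have "AE x in N. ennreal (f x) = 0" using assms(2) by (subst (asm) nn_integral_0_iff_AE) auto
  then have "AE x in N. False" by eventually_elim (metis assms(3) ennreal_eq_0_iff not_le)
  then show False using prob_space.AE_False[OF assms(1)] by simp
qed

declare sk_phi.simps(2) [simp del]

locale sk =
  fixes \<mu> :: "'a measure" and \<nu> :: "'b measure" and c :: "'a \<times> 'b \<Rightarrow> real"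
  assumes mu: "prob_space \<mu>" and nu: "prob_space \<nu>"
    and c_meas[measurable]: "c \<in> borel_measurable (\<mu> \<Otimes>\<^sub>M \<nu>)"
    and ic: "integrable (\<mu> \<Otimes>\<^sub>M \<nu>) (\<lambda>z. exp (- c z))"
begin

sublocale PP: pair_prob_space \<mu> \<nu>
  unfolding pair_prob_space_def pair_sigma_finite_def using mu nu by (auto intro: prob_space_imp_sigma_finite)

abbreviation "M \<equiv> \<mu> \<Otimes>\<^sub>M \<nu>"
abbreviation "phi \<equiv> sk_phi \<mu> \<nu> c"
abbreviation "psi \<equiv> sk_psi \<mu> \<nu> c"

definition "Z t y = (\<integral>\<^sup>+x. ennreal (exp (phi t x - c (x, y))) \<partial>\<mu>)"
definition "W t x = (\<integral>\<^sup>+y. ennreal (exp (psi t y - c (x, y))) \<partial>\<nu>)"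

lemma psi_eq: "psi t y = - ln (enn2real (Z t y))"
  by (simp add: sk_psi_def sk_psi_of_def Z_def)

lemma phi_Suc: "phi (Suc t) x = - ln (enn2real (W t x))"
  by (simp add: W_def sk_psi_def sk_phi.simps(2))

lemma Z_meas: assumes [measurable]: "phi t \<in> borel_measurable \<mu>" shows "Z t \<in> borel_measurable \<nu>"
  unfolding Z_def by measurable

lemma W_meas: assumes [measurable]: "psi t \<in> borel_measurable \<nu>" shows "W t \<in> borel_measurable \<mu>"
  unfolding W_def by measurable

lemma meas_both: "phi t \<in> borel_measurable \<mu> \<and> psi t \<in> borel_measurable \<nu>"
proof (induction t)
  case 0
  have p: "phi 0 \<in> borel_measurable \<mu>" by simp
  have "psi 0 = (\<lambda>y. - ln (enn2real (Z 0 y)))" by (rule ext, rule psi_eq)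
  moreover have "Z 0 \<in> borel_measurable \<nu>" by (rule Z_meas[OF p])
  ultimately show ?case using p by simp
next
  case (Suc t)
  have "phi (Suc t) = (\<lambda>x. - ln (enn2real (W t x)))" by (rule ext, rule phi_Suc)
  moreover have "W t \<in> borel_measurable \<mu>" by (rule W_meas) (use Suc in simp)
  ultimately have p: "phi (Suc t) \<in> borel_measurable \<mu>" by simp
  have "psi (Suc t) = (\<lambda>y. - ln (enn2real (Z (Suc t) y)))" by (rule ext, rule psi_eq)
  moreover have "Z (Suc t) \<in> borel_measurable \<nu>" by (rule Z_meas[OF p])
  ultimately show ?case using p by simp
qed

lemma phi_meas[measurable]: "phi t \<in> borel_measurable \<mu>" using meas_both by blast
lemma psi_meas[measurable]: "psi t \<in> borel_measurable \<nu>" using meas_both by blast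

definition "ea t = (\<lambda>(x,y). ennreal (exp (phi t x + psi t y - c (x, y))))"
definition "eo t = (\<lambda>(x,y). ennreal (exp (phi (Suc t) x + psi t y - c (x, y))))"

lemma ea_meas[measurable]: "ea t \<in> borel_measurable M" unfolding ea_def by measurable
lemma eo_meas[measurable]: "eo t \<in> borel_measurable M" unfolding eo_def by measurable

lemma pi_even: "sk_pi_even \<mu> \<nu> c t = density M (ea t)" by (simp add: sk_pi_even_def ea_def)
lemma pi_odd: "sk_pi_odd \<mu> \<nu> c t = density M (eo t)" by (simp add: sk_pi_odd_def eo_def)

lemma c_y[measurable]: "y \<in> space \<nu> \<Longrightarrow> (\<lambda>x. c (x, y)) \<in> borel_measurable \<mu>"
  by (rule measurable_compose[OF measurable_Pair2' c_meas])
lemma c_x[measurable]: "x \<in> space \<mu> \<Longrightarrow> (\<lambda>y. c (x, y)) \<in> borel_measurable \<nu>"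
  by (rule measurable_compose[OF measurable_Pair1' c_meas])

lemma Z_nz: "y \<in> space \<nu> \<Longrightarrow> Z t y \<noteq> 0"
  unfolding Z_def by (rule nn_pos[OF mu]) auto
lemma W_nz: "x \<in> space \<mu> \<Longrightarrow> W t x \<noteq> 0"
  unfolding W_def by (rule nn_pos[OF nu]) auto

definition "Zpf t \<longleftrightarrow> (AE y in \<nu>. Z t y \<noteq> 0 \<and> Z t y \<noteq> \<top>)"
definition "Wpf t \<longleftrightarrow> (AE x in \<mu>. W t x \<noteq> 0 \<and> W t x \<noteq> \<top>)"

lemma even_y:
  assumes Zp: "Zpf t" and g[measurable]: "g \<in> borel_measurable \<nu>"
  shows "(\<integral>\<^sup>+z. ea t z * g (snd z) \<partial>M) = (\<integral>\<^sup>+y. g y \<partial>\<nu>)"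
proof -
  have "(\<integral>\<^sup>+z. ea t z * g (snd z) \<partial>M) = (\<integral>\<^sup>+y. \<integral>\<^sup>+x. ea t (x, y) * g (snd (x, y)) \<partial>\<mu> \<partial>\<nu>)"
    by (rule PP.nn_integral_snd[symmetric]) measurable
  also have "\<dots> = (\<integral>\<^sup>+y. Z t y * (ennreal (exp (psi t y)) * g y) \<partial>\<nu>)"
  proof (rule nn_integral_cong)
    fix y assume y: "y \<in> space \<nu>"
    have "(\<integral>\<^sup>+x. ea t (x, y) * g (snd (x, y)) \<partial>\<mu>)
        = (\<integral>\<^sup>+x. ennreal (exp (phi t x - c (x, y))) * (ennreal (exp (psi t y)) * g y) \<partial>\<mu>)"
      by (rule nn_integral_cong) (simp add: ea_def ee1)
    also have "\<dots> = Z t y * (ennreal (exp (psi t y)) * g y)"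
      unfolding Z_def using y by (intro nn_integral_multc) measurable
    finally show "(\<integral>\<^sup>+x. ea t (x, y) * g (snd (x, y)) \<partial>\<mu>) = Z t y * (ennreal (exp (psi t y)) * g y)" .
  qed
  also have "\<dots> = (\<integral>\<^sup>+y. g y \<partial>\<nu>)"
  proof (rule nn_integral_cong_AE)
    show "AE y in \<nu>. Z t y * (ennreal (exp (psi t y)) * g y) = g y"
      using Zp unfolding Zpf_def
    proof eventually_elim
      case (elim y)
      then show ?case using ennreal_pos_fin_inv[of "Z t y"] by (simp add: psi_eq mult.assoc[symmetric])
    qed
  qed
  finally show ?thesis .
qed

lemma odd_x:
  assumes Wp: "Wpf t" and g[measurable]: "g \<in> borel_measurable \<mu>"
  shows "(\<integral>\<^sup>+z. eo t z * g (fst z) \<partial>M) = (\<integral>\<^sup>+x. g x \<partial>\<mu>)"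
proof -
  have "(\<integral>\<^sup>+z. eo t z * g (fst z) \<partial>M) = (\<integral>\<^sup>+x. \<integral>\<^sup>+y. eo t (x, y) * g (fst (x, y)) \<partial>\<nu> \<partial>\<mu>)"
    by (rule PP.M2.nn_integral_fst[symmetric]) measurable
  also have "\<dots> = (\<integral>\<^sup>+x. W t x * (ennreal (exp (phi (Suc t) x)) * g x) \<partial>\<mu>)"
  proof (rule nn_integral_cong)
    fix x assume x: "x \<in> space \<mu>"
    have "(\<integral>\<^sup>+y. eo t (x, y) * g (fst (x, y)) \<partial>\<nu>)
        = (\<integral>\<^sup>+y. ennreal (exp (psi t y - c (x, y))) * (ennreal (exp (phi (Suc t) x)) * g x) \<partial>\<nu>)"
      by (rule nn_integral_cong) (simp add: eo_def ee2)
    also have "\<dots> = W t x * (ennreal (exp (phi (Suc t) x)) * g x)"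
      unfolding W_def using x by (intro nn_integral_multc) measurable
    finally show "(\<integral>\<^sup>+y. eo t (x, y) * g (fst (x, y)) \<partial>\<nu>) = W t x * (ennreal (exp (phi (Suc t) x)) * g x)" .
  qed
  also have "\<dots> = (\<integral>\<^sup>+x. g x \<partial>\<mu>)"
  proof (rule nn_integral_cong_AE)
    show "AE x in \<mu>. W t x * (ennreal (exp (phi (Suc t) x)) * g x) = g x"
      using Wp unfolding Wpf_def
    proof eventually_elim
      case (elim x)
      then show ?case using ennreal_pos_fin_inv[of "W t x"] by (simp add: phi_Suc mult.assoc[symmetric])
    qed
  qed
  finally show ?thesis .
qed


lemma ae_fin_mult:
  assumes [measurable]: "g \<in> borel_measurable N" "h \<in> borel_measurable N"
    and "(\<integral>\<^sup>+x. g x * ennreal (exp (h x)) \<partial>N) \<noteq> \<top>"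
  shows "AE x in N. g x \<noteq> \<top>"
proof -
  have "AE x in N. g x * ennreal (exp (h x)) \<noteq> \<top>"
  proof -
    have m: "(\<lambda>x. g x * ennreal (exp (h x))) \<in> borel_measurable N" by measurable
    show ?thesis using nn_integral_noteq_infinite[OF m] assms(3) by simp
  qed
  then show ?thesis by eventually_elim (auto simp: ennreal_mult_eq_top_iff)
qed

lemma Wpf_of: assumes Zp: "Zpf t" shows "Wpf t"
proof -
  have "(\<integral>\<^sup>+z. ea t z \<partial>M) = 1" using even_y[OF Zp, of "\<lambda>_. 1"] by (simp add: PP.M2.emeasure_space_1)
  moreover have "(\<integral>\<^sup>+z. ea t z \<partial>M) = (\<integral>\<^sup>+x. \<integral>\<^sup>+y. ea t (x, y) \<partial>\<nu> \<partial>\<mu>)"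
    by (rule PP.M2.nn_integral_fst[symmetric]) measurable
  moreover have "(\<integral>\<^sup>+x. \<integral>\<^sup>+y. ea t (x, y) \<partial>\<nu> \<partial>\<mu>) = (\<integral>\<^sup>+x. W t x * ennreal (exp (phi t x)) \<partial>\<mu>)"
  proof (rule nn_integral_cong)
    fix x assume x: "x \<in> space \<mu>"
    have "(\<integral>\<^sup>+y. ea t (x, y) \<partial>\<nu>) = (\<integral>\<^sup>+y. ennreal (exp (psi t y - c (x, y))) * ennreal (exp (phi t x)) \<partial>\<nu>)"
      by (rule nn_integral_cong) (use ee2[of "phi t x" _ _ 1] in \<open>simp add: ea_def\<close>)
    also have "\<dots> = W t x * ennreal (exp (phi t x))"
      unfolding W_def using x by (intro nn_integral_multc) measurable
    finally show "(\<integral>\<^sup>+y. ea t (x, y) \<partial>\<nu>) = W t x * ennreal (exp (phi t x))" .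
  qed
  ultimately have "(\<integral>\<^sup>+x. W t x * ennreal (exp (phi t x)) \<partial>\<mu>) \<noteq> \<top>" by simp
  then have "AE x in \<mu>. W t x \<noteq> \<top>" by (intro ae_fin_mult[of _ _ "phi t"] W_meas) auto
  then show ?thesis unfolding Wpf_def using AE_space by eventually_elim (auto simp: W_nz)
qed

lemma Zpf_Suc: assumes Wp: "Wpf t" shows "Zpf (Suc t)"
proof -
  have "(\<integral>\<^sup>+z. eo t z \<partial>M) = 1" using odd_x[OF Wp, of "\<lambda>_. 1"] by (simp add: PP.M1.emeasure_space_1)
  moreover have "(\<integral>\<^sup>+z. eo t z \<partial>M) = (\<integral>\<^sup>+y. \<integral>\<^sup>+x. eo t (x, y) \<partial>\<mu> \<partial>\<nu>)"
    by (rule PP.nn_integral_snd[symmetric]) measurable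
  moreover have "(\<integral>\<^sup>+y. \<integral>\<^sup>+x. eo t (x, y) \<partial>\<mu> \<partial>\<nu>) = (\<integral>\<^sup>+y. Z (Suc t) y * ennreal (exp (psi t y)) \<partial>\<nu>)"
  proof (rule nn_integral_cong)
    fix y assume y: "y \<in> space \<nu>"
    have "(\<integral>\<^sup>+x. eo t (x, y) \<partial>\<mu>) = (\<integral>\<^sup>+x. ennreal (exp (phi (Suc t) x - c (x, y))) * ennreal (exp (psi t y)) \<partial>\<mu>)"
      by (rule nn_integral_cong) (use ee1[of "phi (Suc t) x" "psi t y" _ 1 for x] in \<open>simp add: eo_def\<close>)
    also have "\<dots> = Z (Suc t) y * ennreal (exp (psi t y))"
      unfolding Z_def using y by (intro nn_integral_multc) measurable
    finally show "(\<integral>\<^sup>+x. eo t (x, y) \<partial>\<mu>) = Z (Suc t) y * ennreal (exp (psi t y))" .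
  qed
  ultimately have "(\<integral>\<^sup>+y. Z (Suc t) y * ennreal (exp (psi t y)) \<partial>\<nu>) \<noteq> \<top>" by simp
  then have "AE y in \<nu>. Z (Suc t) y \<noteq> \<top>" by (intro ae_fin_mult[of _ _ "psi t"] Z_meas) auto
  then show ?thesis unfolding Zpf_def using AE_space by eventually_elim (auto simp: Z_nz)
qed

lemma Zpf_0: "Zpf 0"
proof -
  have fin: "(\<integral>\<^sup>+z. ennreal (exp (- c z)) \<partial>M) < \<infinity>"
    using ic unfolding real_integrable_def by (auto simp: less_top)
  have "(\<integral>\<^sup>+y. Z 0 y \<partial>\<nu>) = (\<integral>\<^sup>+y. \<integral>\<^sup>+x. ennreal (exp (- c (x, y))) \<partial>\<mu> \<partial>\<nu>)"
    unfolding Z_def by simp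
  also have "\<dots> = (\<integral>\<^sup>+z. ennreal (exp (- c z)) \<partial>M)"
    by (rule PP.nn_integral_snd) measurable
  finally have "(\<integral>\<^sup>+y. Z 0 y \<partial>\<nu>) \<noteq> \<top>" using fin by simp
  then have "AE y in \<nu>. Z 0 y \<noteq> \<top>" using nn_integral_noteq_infinite[OF Z_meas, of 0] by simp
  then show ?thesis unfolding Zpf_def using AE_space by eventually_elim (auto simp: Z_nz)
qed

lemma Zpf: "Zpf t" by (induction t) (auto intro: Zpf_0 Zpf_Suc Wpf_of)
lemma Wpf: "Wpf t" by (rule Wpf_of[OF Zpf])

lemma even_x:
  assumes g[measurable]: "g \<in> borel_measurable \<mu>"
  shows "(\<integral>\<^sup>+z. ea t z * g (fst z) \<partial>M) = (\<integral>\<^sup>+x. g x * ennreal (exp (phi t x - phi (Suc t) x)) \<partial>\<mu>)"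
proof -
  have "(\<integral>\<^sup>+z. ea t z * g (fst z) \<partial>M) = (\<integral>\<^sup>+x. \<integral>\<^sup>+y. ea t (x, y) * g (fst (x, y)) \<partial>\<nu> \<partial>\<mu>)"
    by (rule PP.M2.nn_integral_fst[symmetric]) measurable
  also have "\<dots> = (\<integral>\<^sup>+x. W t x * (ennreal (exp (phi t x)) * g x) \<partial>\<mu>)"
  proof (rule nn_integral_cong)
    fix x assume x: "x \<in> space \<mu>"
    have "(\<integral>\<^sup>+y. ea t (x, y) * g (fst (x, y)) \<partial>\<nu>)
        = (\<integral>\<^sup>+y. ennreal (exp (psi t y - c (x, y))) * (ennreal (exp (phi t x)) * g x) \<partial>\<nu>)"
      by (rule nn_integral_cong) (simp add: ea_def ee2)
    also have "\<dots> = W t x * (ennreal (exp (phi t x)) * g x)"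
      unfolding W_def using x by (intro nn_integral_multc) measurable
    finally show "(\<integral>\<^sup>+y. ea t (x, y) * g (fst (x, y)) \<partial>\<nu>) = W t x * (ennreal (exp (phi t x)) * g x)" .
  qed
  also have "\<dots> = (\<integral>\<^sup>+x. g x * ennreal (exp (phi t x - phi (Suc t) x)) \<partial>\<mu>)"
  proof (rule nn_integral_cong_AE)
    show "AE x in \<mu>. W t x * (ennreal (exp (phi t x)) * g x) = g x * ennreal (exp (phi t x - phi (Suc t) x))"
      using Wpf[of t] unfolding Wpf_def
    proof eventually_elim
      case (elim x)
      have e: "W t x * ennreal (exp (phi t x)) = ennreal (exp (phi t x - phi (Suc t) x))"
        unfolding phi_Suc using elim by (intro ennreal_pos_fin_exp) auto
      show ?case by (metis e mult.assoc mult.commute)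
    qed
  qed
  finally show ?thesis .
qed

lemma odd_y:
  assumes g[measurable]: "g \<in> borel_measurable \<nu>"
  shows "(\<integral>\<^sup>+z. eo t z * g (snd z) \<partial>M) = (\<integral>\<^sup>+y. g y * ennreal (exp (psi t y - psi (Suc t) y)) \<partial>\<nu>)"
proof -
  have "(\<integral>\<^sup>+z. eo t z * g (snd z) \<partial>M) = (\<integral>\<^sup>+y. \<integral>\<^sup>+x. eo t (x, y) * g (snd (x, y)) \<partial>\<mu> \<partial>\<nu>)"
    by (rule PP.nn_integral_snd[symmetric]) measurable
  also have "\<dots> = (\<integral>\<^sup>+y. Z (Suc t) y * (ennreal (exp (psi t y)) * g y) \<partial>\<nu>)"
  proof (rule nn_integral_cong)
    fix y assume y: "y \<in> space \<nu>"
    have "(\<integral>\<^sup>+x. eo t (x, y) * g (snd (x, y)) \<partial>\<mu>)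
        = (\<integral>\<^sup>+x. ennreal (exp (phi (Suc t) x - c (x, y))) * (ennreal (exp (psi t y)) * g y) \<partial>\<mu>)"
      by (rule nn_integral_cong) (simp add: eo_def ee1)
    also have "\<dots> = Z (Suc t) y * (ennreal (exp (psi t y)) * g y)"
      unfolding Z_def using y by (intro nn_integral_multc) measurable
    finally show "(\<integral>\<^sup>+x. eo t (x, y) * g (snd (x, y)) \<partial>\<mu>) = Z (Suc t) y * (ennreal (exp (psi t y)) * g y)" .
  qed
  also have "\<dots> = (\<integral>\<^sup>+y. g y * ennreal (exp (psi t y - psi (Suc t) y)) \<partial>\<nu>)"
  proof (rule nn_integral_cong_AE)
    show "AE y in \<nu>. Z (Suc t) y * (ennreal (exp (psi t y)) * g y) = g y * ennreal (exp (psi t y - psi (Suc t) y))"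
      using Zpf[of "Suc t"] unfolding Zpf_def
    proof eventually_elim
      case (elim y)
      have e: "Z (Suc t) y * ennreal (exp (psi t y)) = ennreal (exp (psi t y - psi (Suc t) y))"
        unfolding psi_eq[of "Suc t"] using elim by (intro ennreal_pos_fin_exp) auto
      show ?case by (metis e mult.assoc mult.commute)
    qed
  qed
  finally show ?thesis .
qed

lemma ea_total: "(\<integral>\<^sup>+z. ea t z \<partial>M) = 1"
  using even_y[OF Zpf, of "\<lambda>_. 1"] by (simp add: PP.M2.emeasure_space_1)
lemma eo_total: "(\<integral>\<^sup>+z. eo t z \<partial>M) = 1"
  using odd_x[OF Wpf, of "\<lambda>_. 1"] by (simp add: PP.M1.emeasure_space_1)
lemma mu_tot: "(\<integral>\<^sup>+x. ennreal (exp (phi t x - phi (Suc t) x)) \<partial>\<mu>) = 1"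
  using even_x[of "\<lambda>_. 1" t] ea_total[of t] by simp
lemma nu_tot: "(\<integral>\<^sup>+y. ennreal (exp (psi t y - psi (Suc t) y)) \<partial>\<nu>) = 1"
  using odd_y[of "\<lambda>_. 1" t] eo_total[of t] by simp


lemma mu_even: "sk_mu_even \<mu> \<nu> c t = density \<mu> (\<lambda>x. ennreal (exp (phi t x - phi (Suc t) x)))"
  (is "_ = density \<mu> ?p")
proof (rule measure_eqI)
  show "sets (sk_mu_even \<mu> \<nu> c t) = sets (density \<mu> ?p)" by (simp add: sk_mu_even_def)
next
  fix A assume "A \<in> sets (sk_mu_even \<mu> \<nu> c t)"
  then have A[measurable]: "A \<in> sets \<mu>" by (simp add: sk_mu_even_def)
  have S: "fst -` A \<inter> space M \<in> sets M" by (rule measurable_sets[OF measurable_fst A])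
  have "emeasure (sk_mu_even \<mu> \<nu> c t) A = emeasure (density M (ea t)) (fst -` A \<inter> space (density M (ea t)))"
    unfolding sk_mu_even_def pi_even by (rule emeasure_distr) auto
  also have "\<dots> = (\<integral>\<^sup>+z. ea t z * indicator (fst -` A \<inter> space M) z \<partial>M)"
    by (simp add: emeasure_density S)
  also have "\<dots> = (\<integral>\<^sup>+z. ea t z * indicator A (fst z) \<partial>M)"
    by (rule nn_integral_cong) (auto simp: indicator_def)
  also have "\<dots> = (\<integral>\<^sup>+x. indicator A x * ?p x \<partial>\<mu>)" by (rule even_x) measurable
  also have "\<dots> = emeasure (density \<mu> ?p) A" by (simp add: emeasure_density mult.commute)
  finally show "emeasure (sk_mu_even \<mu> \<nu> c t) A = emeasure (density \<mu> ?p) A" .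
qed

lemma nu_odd: "sk_nu_odd \<mu> \<nu> c t = density \<nu> (\<lambda>y. ennreal (exp (psi t y - psi (Suc t) y)))"
  (is "_ = density \<nu> ?p")
proof (rule measure_eqI)
  show "sets (sk_nu_odd \<mu> \<nu> c t) = sets (density \<nu> ?p)" by (simp add: sk_nu_odd_def)
next
  fix A assume "A \<in> sets (sk_nu_odd \<mu> \<nu> c t)"
  then have A[measurable]: "A \<in> sets \<nu>" by (simp add: sk_nu_odd_def)
  have S: "snd -` A \<inter> space M \<in> sets M" by (rule measurable_sets[OF measurable_snd A])
  have "emeasure (sk_nu_odd \<mu> \<nu> c t) A = emeasure (density M (eo t)) (snd -` A \<inter> space (density M (eo t)))"
    unfolding sk_nu_odd_def pi_odd by (rule emeasure_distr) auto
  also have "\<dots> = (\<integral>\<^sup>+z. eo t z * indicator (snd -` A \<inter> space M) z \<partial>M)"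
    by (simp add: emeasure_density S)
  also have "\<dots> = (\<integral>\<^sup>+z. eo t z * indicator A (snd z) \<partial>M)"
    by (rule nn_integral_cong) (auto simp: indicator_def)
  also have "\<dots> = (\<integral>\<^sup>+y. indicator A y * ?p y \<partial>\<nu>)" by (rule odd_y) measurable
  also have "\<dots> = emeasure (density \<nu> ?p) A" by (simp add: emeasure_density mult.commute)
  finally show "emeasure (sk_nu_odd \<mu> \<nu> c t) A = emeasure (density \<nu> ?p) A" .
qed

lemma prob_dens:
  assumes [measurable]: "f \<in> borel_measurable N" and "(\<integral>\<^sup>+x. f x \<partial>N) = 1"
  shows "prob_space (density N f)"
proof (rule prob_spaceI)
  have "emeasure (density N f) (space (density N f)) = (\<integral>\<^sup>+x. f x * indicator (space N) x \<partial>N)"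
    by (simp add: emeasure_density)
  also have "\<dots> = (\<integral>\<^sup>+x. f x \<partial>N)" by (rule nn_integral_cong) auto
  finally show "emeasure (density N f) (space (density N f)) = 1" using assms(2) by simp
qed

lemma prob_even: "prob_space (density M (ea t))" by (rule prob_dens[OF _ ea_total]) measurable
lemma prob_odd: "prob_space (density M (eo t))" by (rule prob_dens[OF _ eo_total]) measurable
lemma prob_mu_even: "prob_space (density \<mu> (\<lambda>x. ennreal (exp (phi t x - phi (Suc t) x))))"
  by (rule prob_dens[OF _ mu_tot]) measurable
lemma prob_nu_odd: "prob_space (density \<nu> (\<lambda>y. ennreal (exp (psi t y - psi (Suc t) y))))"
  by (rule prob_dens[OF _ nu_tot]) measurable

lemma dens_odd_x: assumes [measurable]: "g \<in> borel_measurable \<mu>"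
  shows "(\<integral>\<^sup>+z. g (fst z) \<partial>density M (eo t)) = (\<integral>\<^sup>+x. g x \<partial>\<mu>)"
proof -
  have "(\<integral>\<^sup>+z. g (fst z) \<partial>density M (eo t)) = (\<integral>\<^sup>+z. eo t z * g (fst z) \<partial>M)"
    by (rule nn_integral_density) measurable
  also have "\<dots> = (\<integral>\<^sup>+x. g x \<partial>\<mu>)" by (rule odd_x[OF Wpf]) measurable
  finally show ?thesis .
qed

lemma dens_even_y: assumes [measurable]: "g \<in> borel_measurable \<nu>"
  shows "(\<integral>\<^sup>+z. g (snd z) \<partial>density M (ea t)) = (\<integral>\<^sup>+y. g y \<partial>\<nu>)"
proof -
  have "(\<integral>\<^sup>+z. g (snd z) \<partial>density M (ea t)) = (\<integral>\<^sup>+z. ea t z * g (snd z) \<partial>M)"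
    by (rule nn_integral_density) measurable
  also have "\<dots> = (\<integral>\<^sup>+y. g y \<partial>\<nu>)" by (rule even_y[OF Zpf]) measurable
  finally show ?thesis .
qed

lemma dens_even_x: assumes [measurable]: "g \<in> borel_measurable \<mu>"
  shows "(\<integral>\<^sup>+z. g (fst z) \<partial>density M (ea t)) = (\<integral>\<^sup>+x. g x \<partial>density \<mu> (\<lambda>x. ennreal (exp (phi t x - phi (Suc t) x))))"
proof -
  have "(\<integral>\<^sup>+z. g (fst z) \<partial>density M (ea t)) = (\<integral>\<^sup>+z. ea t z * g (fst z) \<partial>M)"
    by (rule nn_integral_density) measurable
  also have "\<dots> = (\<integral>\<^sup>+x. g x * ennreal (exp (phi t x - phi (Suc t) x)) \<partial>\<mu>)" by (rule even_x) measurable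
  also have "\<dots> = (\<integral>\<^sup>+x. g x \<partial>density \<mu> (\<lambda>x. ennreal (exp (phi t x - phi (Suc t) x))))"
    by (subst nn_integral_density) (auto simp: mult.commute)
  finally show ?thesis .
qed

lemma Ient_odd_x: assumes [measurable]: "h \<in> borel_measurable \<mu>"
  shows "Ient (density M (eo t)) (\<lambda>z. h (fst z)) = Ient \<mu> h"
proof -
  have a: "(\<integral>\<^sup>+z. ennreal (max 0 (h (fst z))) \<partial>density M (eo t)) = (\<integral>\<^sup>+x. ennreal (max 0 (h x)) \<partial>\<mu>)"
    by (rule dens_odd_x) measurable
  have b: "(\<integral>\<^sup>+z. ennreal (max 0 (- h (fst z))) \<partial>density M (eo t)) = (\<integral>\<^sup>+x. ennreal (max 0 (- h x)) \<partial>\<mu>)"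
    by (rule dens_odd_x) measurable
  show ?thesis unfolding Ient_def a b ..
qed

lemma Ient_even_y: assumes [measurable]: "h \<in> borel_measurable \<nu>"
  shows "Ient (density M (ea t)) (\<lambda>z. h (snd z)) = Ient \<nu> h"
proof -
  have a: "(\<integral>\<^sup>+z. ennreal (max 0 (h (snd z))) \<partial>density M (ea t)) = (\<integral>\<^sup>+x. ennreal (max 0 (h x)) \<partial>\<nu>)"
    by (rule dens_even_y) measurable
  have b: "(\<integral>\<^sup>+z. ennreal (max 0 (- h (snd z))) \<partial>density M (ea t)) = (\<integral>\<^sup>+x. ennreal (max 0 (- h x)) \<partial>\<nu>)"
    by (rule dens_even_y) measurable
  show ?thesis unfolding Ient_def a b ..
qed

lemma Ient_even_x: assumes [measurable]: "h \<in> borel_measurable \<mu>"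
  shows "Ient (density M (ea t)) (\<lambda>z. h (fst z)) = Ient (density \<mu> (\<lambda>x. ennreal (exp (phi t x - phi (Suc t) x)))) h"
proof -
  have a: "(\<integral>\<^sup>+z. ennreal (max 0 (h (fst z))) \<partial>density M (ea t)) = (\<integral>\<^sup>+x. ennreal (max 0 (h x)) \<partial>density \<mu> (\<lambda>x. ennreal (exp (phi t x - phi (Suc t) x))))"
    by (rule dens_even_x) measurable
  have b: "(\<integral>\<^sup>+z. ennreal (max 0 (- h (fst z))) \<partial>density M (ea t)) = (\<integral>\<^sup>+x. ennreal (max 0 (- h x)) \<partial>density \<mu> (\<lambda>x. ennreal (exp (phi t x - phi (Suc t) x))))"
    by (rule dens_even_x) measurable
  show ?thesis unfolding Ient_def a b ..
qed

lemma eexp_eq: "a + b = p + q \<Longrightarrow> ennreal (exp a) * ennreal (exp b) = ennreal (exp p) * ennreal (exp q)"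
proof -
  assume h: "a + b = p + q"
  have "ennreal (exp a) * ennreal (exp b) = ennreal (exp a * exp b)" by (rule ennreal_mult[symmetric]) auto
  also have "\<dots> = ennreal (exp (p + q))" by (simp add: exp_add[symmetric] h)
  also have "\<dots> = ennreal (exp p) * ennreal (exp q)" by (simp add: exp_add ennreal_mult)
  finally show ?thesis .
qed

lemma G1: "Ient (density M (eo t)) (\<lambda>z. psi t (snd z) - psi (Suc t) (snd z))
    \<le> Ient (density M (eo t)) (\<lambda>z. phi (Suc t) (fst z) - phi t (fst z))"
proof (rule Ient_gibbs[OF prob_odd])
  have "(\<integral>\<^sup>+z. ennreal (exp ((psi t (snd z) - psi (Suc t) (snd z)) - (phi (Suc t) (fst z) - phi t (fst z)))) \<partial>density M (eo t))
      = (\<integral>\<^sup>+z. eo t z * ennreal (exp ((psi t (snd z) - psi (Suc t) (snd z)) - (phi (Suc t) (fst z) - phi t (fst z)))) \<partial>M)"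
    by (rule nn_integral_density) measurable
  also have "\<dots> = (\<integral>\<^sup>+z. ea t z * ennreal (exp (psi t (snd z) - psi (Suc t) (snd z))) \<partial>M)"
  proof (rule nn_integral_cong)
    fix z :: "'a \<times> 'b" obtain x y where z: "z = (x, y)" by (cases z)
    show "eo t z * ennreal (exp ((psi t (snd z) - psi (Suc t) (snd z)) - (phi (Suc t) (fst z) - phi t (fst z))))
        = ea t z * ennreal (exp (psi t (snd z) - psi (Suc t) (snd z)))"
      unfolding z eo_def ea_def by (simp only: prod.case fst_conv snd_conv, rule eexp_eq, simp add: algebra_simps)
  qed
  also have "\<dots> = (\<integral>\<^sup>+y. ennreal (exp (psi t y - psi (Suc t) y)) \<partial>\<nu>)" by (rule even_y[OF Zpf]) measurable
  also have "\<dots> = 1" by (rule nu_tot)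
  finally show "(\<integral>\<^sup>+z. ennreal (exp ((psi t (snd z) - psi (Suc t) (snd z)) - (phi (Suc t) (fst z) - phi t (fst z)))) \<partial>density M (eo t)) \<le> 1" by simp
qed measurable

lemma G2: "Ient (density M (eo t)) (\<lambda>z. phi (Suc (Suc t)) (fst z) - phi (Suc t) (fst z))
    \<le> Ient (density M (eo t)) (\<lambda>z. psi t (snd z) - psi (Suc t) (snd z))"
proof (rule Ient_gibbs[OF prob_odd])
  have "(\<integral>\<^sup>+z. ennreal (exp ((phi (Suc (Suc t)) (fst z) - phi (Suc t) (fst z)) - (psi t (snd z) - psi (Suc t) (snd z)))) \<partial>density M (eo t))
      = (\<integral>\<^sup>+z. eo t z * ennreal (exp ((phi (Suc (Suc t)) (fst z) - phi (Suc t) (fst z)) - (psi t (snd z) - psi (Suc t) (snd z)))) \<partial>M)"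
    by (rule nn_integral_density) measurable
  also have "\<dots> = (\<integral>\<^sup>+z. ea (Suc t) z * ennreal (exp (phi (Suc (Suc t)) (fst z) - phi (Suc t) (fst z))) \<partial>M)"
  proof (rule nn_integral_cong)
    fix z :: "'a \<times> 'b" obtain x y where z: "z = (x, y)" by (cases z)
    show "eo t z * ennreal (exp ((phi (Suc (Suc t)) (fst z) - phi (Suc t) (fst z)) - (psi t (snd z) - psi (Suc t) (snd z))))
        = ea (Suc t) z * ennreal (exp (phi (Suc (Suc t)) (fst z) - phi (Suc t) (fst z)))"
      unfolding z eo_def ea_def by (simp only: prod.case fst_conv snd_conv, rule eexp_eq, simp add: algebra_simps)
  qed
  also have "\<dots> = (\<integral>\<^sup>+x. ennreal (exp (phi (Suc (Suc t)) x - phi (Suc t) x)) * ennreal (exp (phi (Suc t) x - phi (Suc (Suc t)) x)) \<partial>\<mu>)"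
    by (rule even_x) measurable
  also have "\<dots> = (\<integral>\<^sup>+x. 1 \<partial>\<mu>)"
    by (rule nn_integral_cong) (simp add: ennreal_mult[symmetric] exp_add[symmetric] del: ennreal_mult'')
  also have "\<dots> = 1" by (simp add: PP.M1.emeasure_space_1)
  finally show "(\<integral>\<^sup>+z. ennreal (exp ((phi (Suc (Suc t)) (fst z) - phi (Suc t) (fst z)) - (psi t (snd z) - psi (Suc t) (snd z)))) \<partial>density M (eo t)) \<le> 1" by simp
qed measurable

lemma G3: "Ient (density M (ea (Suc t))) (\<lambda>z. phi (Suc t) (fst z) - phi (Suc (Suc t)) (fst z))
    \<le> Ient (density M (ea (Suc t))) (\<lambda>z. psi (Suc t) (snd z) - psi t (snd z))"
proof (rule Ient_gibbs[OF prob_even])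
  have "(\<integral>\<^sup>+z. ennreal (exp ((phi (Suc t) (fst z) - phi (Suc (Suc t)) (fst z)) - (psi (Suc t) (snd z) - psi t (snd z)))) \<partial>density M (ea (Suc t)))
      = (\<integral>\<^sup>+z. ea (Suc t) z * ennreal (exp ((phi (Suc t) (fst z) - phi (Suc (Suc t)) (fst z)) - (psi (Suc t) (snd z) - psi t (snd z)))) \<partial>M)"
    by (rule nn_integral_density) measurable
  also have "\<dots> = (\<integral>\<^sup>+z. eo t z * ennreal (exp (phi (Suc t) (fst z) - phi (Suc (Suc t)) (fst z))) \<partial>M)"
  proof (rule nn_integral_cong)
    fix z :: "'a \<times> 'b" obtain x y where z: "z = (x, y)" by (cases z)
    show "ea (Suc t) z * ennreal (exp ((phi (Suc t) (fst z) - phi (Suc (Suc t)) (fst z)) - (psi (Suc t) (snd z) - psi t (snd z))))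
        = eo t z * ennreal (exp (phi (Suc t) (fst z) - phi (Suc (Suc t)) (fst z)))"
      unfolding z eo_def ea_def by (simp only: prod.case fst_conv snd_conv, rule eexp_eq, simp add: algebra_simps)
  qed
  also have "\<dots> = (\<integral>\<^sup>+x. ennreal (exp (phi (Suc t) x - phi (Suc (Suc t)) x)) \<partial>\<mu>)" by (rule odd_x[OF Wpf]) measurable
  also have "\<dots> = 1" by (rule mu_tot)
  finally show "(\<integral>\<^sup>+z. ennreal (exp ((phi (Suc t) (fst z) - phi (Suc (Suc t)) (fst z)) - (psi (Suc t) (snd z) - psi t (snd z)))) \<partial>density M (ea (Suc t))) \<le> 1" by simp
qed measurable

lemma G4: "0 \<le> Ient \<mu> (\<lambda>x. phi (Suc (Suc t)) x - phi (Suc t) x)"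
proof -
  have "Ient \<mu> (\<lambda>x. 0) \<le> Ient \<mu> (\<lambda>x. phi (Suc (Suc t)) x - phi (Suc t) x)"
  proof (rule Ient_gibbs[OF mu])
    show "(\<integral>\<^sup>+x. ennreal (exp (0 - (phi (Suc (Suc t)) x - phi (Suc t) x))) \<partial>\<mu>) \<le> 1"
      using mu_tot[of "Suc t"] by simp
  qed measurable
  then show ?thesis by (simp add: Ient_def)
qed


lemma d1: "density N (\<lambda>x. ennreal 1) = N" by (simp add: density_1)

lemma H1: "rel_entropy \<mu> (sk_mu_even \<mu> \<nu> c t) = Ient \<mu> (\<lambda>x. phi (Suc t) x - phi t x)"
proof -
  have "rel_entropy (density \<mu> (\<lambda>x. ennreal 1)) (density \<mu> (\<lambda>x. ennreal (exp (phi t x - phi (Suc t) x))))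
      = Ient (density \<mu> (\<lambda>x. ennreal 1)) (\<lambda>x. ln (1 / exp (phi t x - phi (Suc t) x)))"
    by (rule rel_entropy_density) (auto intro: prob_space.finite_measure prob_mu_even)
  also have "\<dots> = Ient \<mu> (\<lambda>x. phi (Suc t) x - phi t x)"
    unfolding d1 by (rule Ient_cong_AE) (auto simp: ln_div)
  finally show ?thesis unfolding mu_even d1 .
qed

lemma H2: "rel_entropy \<nu> (sk_nu_odd \<mu> \<nu> c t) = Ient \<nu> (\<lambda>y. psi (Suc t) y - psi t y)"
proof -
  have "rel_entropy (density \<nu> (\<lambda>x. ennreal 1)) (density \<nu> (\<lambda>y. ennreal (exp (psi t y - psi (Suc t) y))))
      = Ient (density \<nu> (\<lambda>x. ennreal 1)) (\<lambda>y. ln (1 / exp (psi t y - psi (Suc t) y)))"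
    by (rule rel_entropy_density) (auto intro: prob_space.finite_measure prob_nu_odd)
  also have "\<dots> = Ient \<nu> (\<lambda>y. psi (Suc t) y - psi t y)"
    unfolding d1 by (rule Ient_cong_AE) (auto simp: ln_div)
  finally show ?thesis unfolding nu_odd d1 .
qed

lemma H3: "rel_entropy (sk_mu_even \<mu> \<nu> c t) \<mu>
   = Ient (density \<mu> (\<lambda>x. ennreal (exp (phi t x - phi (Suc t) x)))) (\<lambda>x. phi t x - phi (Suc t) x)"
proof -
  have "rel_entropy (density \<mu> (\<lambda>x. ennreal (exp (phi t x - phi (Suc t) x)))) (density \<mu> (\<lambda>x. ennreal 1))
      = Ient (density \<mu> (\<lambda>x. ennreal (exp (phi t x - phi (Suc t) x)))) (\<lambda>x. ln (exp (phi t x - phi (Suc t) x) / 1))"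
    by (rule rel_entropy_density) (auto simp: density_1 intro!: prob_space.finite_measure[OF mu])
  also have "\<dots> = Ient (density \<mu> (\<lambda>x. ennreal (exp (phi t x - phi (Suc t) x)))) (\<lambda>x. phi t x - phi (Suc t) x)"
    by simp
  finally show ?thesis unfolding mu_even d1 .
qed

lemma part23:
  "- (rel_entropy \<mu> (sk_mu_even \<mu> \<nu> c t) + rel_entropy \<nu> (sk_nu_odd \<mu> \<nu> c t))
     \<le> - (rel_entropy (sk_mu_even \<mu> \<nu> c (Suc t)) \<mu> + rel_entropy \<mu> (sk_mu_even \<mu> \<nu> c (Suc t)))"
  "- (rel_entropy (sk_mu_even \<mu> \<nu> c (Suc t)) \<mu> + rel_entropy \<mu> (sk_mu_even \<mu> \<nu> c (Suc t)))
     \<le> - rel_entropy (sk_mu_even \<mu> \<nu> c (Suc t)) \<mu>"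
proof -
  define A where "A = Ient \<mu> (\<lambda>x. phi (Suc t) x - phi t x)"
  define B where "B = Ient \<nu> (\<lambda>y. psi (Suc t) y - psi t y)"
  define C where "C = Ient (density \<mu> (\<lambda>x. ennreal (exp (phi (Suc t) x - phi (Suc (Suc t)) x)))) (\<lambda>x. phi (Suc t) x - phi (Suc (Suc t)) x)"
  define D where "D = Ient \<mu> (\<lambda>x. phi (Suc (Suc t)) x - phi (Suc t) x)"
  have eA: "rel_entropy \<mu> (sk_mu_even \<mu> \<nu> c t) = A" unfolding A_def by (rule H1)
  have eB: "rel_entropy \<nu> (sk_nu_odd \<mu> \<nu> c t) = B" unfolding B_def by (rule H2)
  have eC: "rel_entropy (sk_mu_even \<mu> \<nu> c (Suc t)) \<mu> = C" unfolding C_def by (rule H3)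
  have eD: "rel_entropy \<mu> (sk_mu_even \<mu> \<nu> c (Suc t)) = D" unfolding D_def by (rule H1)
  have g1: "Ient (density M (eo t)) (\<lambda>z. psi t (snd z) - psi (Suc t) (snd z)) \<le> A"
    using G1[of t] Ient_odd_x[of "\<lambda>x. phi (Suc t) x - phi t x" t] unfolding A_def by simp
  have g2: "D \<le> Ient (density M (eo t)) (\<lambda>z. psi t (snd z) - psi (Suc t) (snd z))"
    using G2[of t] Ient_odd_x[of "\<lambda>x. phi (Suc (Suc t)) x - phi (Suc t) x" t] unfolding D_def by simp
  have DA: "D \<le> A" using g1 g2 by (rule order.trans[rotated])
  have CB: "C \<le> B"
    using G3[of t] Ient_odd_x[of "\<lambda>x. phi (Suc t) x - phi (Suc (Suc t)) x" t]
      Ient_even_x[of "\<lambda>x. phi (Suc t) x - phi (Suc (Suc t)) x" "Suc t"]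
      Ient_even_y[of "\<lambda>y. psi (Suc t) y - psi t y" "Suc t"]
    unfolding B_def C_def by simp
  have D0: "0 \<le> D" unfolding D_def by (rule G4)
  have "C + D \<le> A + B" using add_mono[OF CB DA] by (simp add: add.commute)
  then show "- (rel_entropy \<mu> (sk_mu_even \<mu> \<nu> c t) + rel_entropy \<nu> (sk_nu_odd \<mu> \<nu> c t))
     \<le> - (rel_entropy (sk_mu_even \<mu> \<nu> c (Suc t)) \<mu> + rel_entropy \<mu> (sk_mu_even \<mu> \<nu> c (Suc t)))"
    unfolding eA eB eC eD by simp
  have "C \<le> C + D" using add_increasing2[OF D0 order.refl] .
  then show "- (rel_entropy (sk_mu_even \<mu> \<nu> c (Suc t)) \<mu> + rel_entropy \<mu> (sk_mu_even \<mu> \<nu> c (Suc t)))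
     \<le> - rel_entropy (sk_mu_even \<mu> \<nu> c (Suc t)) \<mu>"
    unfolding eC eD by simp
qed

end

lemma ereal_fin3:
  fixes a b r :: ereal
  assumes "0 \<le> a" "0 \<le> b" "\<bar>a - b + r\<bar> \<noteq> \<infinity>"
  shows "a \<noteq> \<infinity> \<and> b \<noteq> \<infinity> \<and> \<bar>r\<bar> \<noteq> \<infinity>"
  using assms by (cases a; cases b; cases r) auto

lemma max0_exp: "max 0 x \<le> exp x" for x :: real
proof (cases "x \<le> 0")
  case True then show ?thesis by (simp add: max_def)
next
  case False
  have "x \<le> exp x" using exp_ge_add_one_self[of x] by linarith
  then show ?thesis using False by (simp add: max_def)
qed

lemma exp_bound:
  assumes [measurable]: "f \<in> borel_measurable N" and e: "(\<integral>\<^sup>+x. ennreal (exp (f x)) \<partial>N) < \<infinity>"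
  shows "(\<integral>\<^sup>+x. ennreal (max 0 (f x)) \<partial>N) < \<infinity>"
proof -
  have "(\<integral>\<^sup>+x. ennreal (max 0 (f x)) \<partial>N) \<le> (\<integral>\<^sup>+x. ennreal (exp (f x)) \<partial>N)"
    by (intro nn_integral_mono ennreal_leI max0_exp)
  then show ?thesis using e by (rule le_less_trans)
qed

lemma max0_le3: assumes "x = a + b + d"
  shows "ennreal (max 0 x) \<le> ennreal (max 0 a) + (ennreal (max 0 b) + ennreal (max 0 d))"
proof -
  have "ennreal (max 0 x) \<le> ennreal (max 0 a) + ennreal (max 0 (b + d))" by (rule max0_le) (simp add: assms)
  also have "\<dots> \<le> ennreal (max 0 a) + (ennreal (max 0 b) + ennreal (max 0 d))"
    by (rule add_left_mono, rule max0_le) simp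
  finally show ?thesis .
qed

lemma sum3_fin:
  assumes [measurable]: "f \<in> borel_measurable N" "g \<in> borel_measurable N" "h \<in> borel_measurable N"
    and "(\<integral>\<^sup>+x. f x \<partial>N) < \<infinity>" "(\<integral>\<^sup>+x. g x \<partial>N) < \<infinity>" "(\<integral>\<^sup>+x. h x \<partial>N) < \<infinity>"
  shows "(\<integral>\<^sup>+x. f x + (g x + h x) \<partial>N) < \<infinity>"
proof -
  have "(\<integral>\<^sup>+x. f x + (g x + h x) \<partial>N) = (\<integral>\<^sup>+x. f x \<partial>N) + ((\<integral>\<^sup>+x. g x \<partial>N) + (\<integral>\<^sup>+x. h x \<partial>N))"
    by (simp add: nn_integral_add)
  then show ?thesis using assms(4-6) by (simp add: less_top)
qed

lemma sum2_fin:
  assumes [measurable]: "f \<in> borel_measurable N" "g \<in> borel_measurable N"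
    and "(\<integral>\<^sup>+x. f x \<partial>N) < \<infinity>" "(\<integral>\<^sup>+x. g x \<partial>N) < \<infinity>"
  shows "(\<integral>\<^sup>+x. f x + g x \<partial>N) < \<infinity>"
proof -
  have "(\<integral>\<^sup>+x. f x + g x \<partial>N) = (\<integral>\<^sup>+x. f x \<partial>N) + (\<integral>\<^sup>+x. g x \<partial>N)"
    by (simp add: nn_integral_add)
  then show ?thesis using assms(3-4) by (simp add: less_top)
qed

locale sk_pi = sk +
  fixes \<pi>s :: "('a \<times> 'b) measure"
  assumes cpl: "\<pi>s \<in> couplings \<mu> \<nu>" and fin: "\<bar>entropic_cost \<mu> \<nu> c \<pi>s\<bar> \<noteq> \<infinity>"
begin

lemma sets_pi: "sets \<pi>s = sets M" using cpl by (simp add: couplings_def)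
lemma prob_pi: "prob_space \<pi>s" using cpl by (simp add: couplings_def)
lemma marg1: "distr \<pi>s \<mu> fst = \<mu>" using cpl by (simp add: couplings_def)
lemma marg2: "distr \<pi>s \<nu> snd = \<nu>" using cpl by (simp add: couplings_def)
lemma meas_pi: "measurable \<pi>s N = measurable M N" by (rule measurable_cong_sets[OF sets_pi refl])
lemma fst_pi[measurable]: "fst \<in> measurable \<pi>s \<mu>" unfolding meas_pi by (rule measurable_fst)
lemma snd_pi[measurable]: "snd \<in> measurable \<pi>s \<nu>" unfolding meas_pi by (rule measurable_snd)
lemma c_pi[measurable]: "c \<in> borel_measurable \<pi>s" unfolding meas_pi by (rule c_meas)

lemma probM: "prob_space M"
  by (rule prob_spaceI) (simp add: PP.M2.emeasure_pair_measure_Times PP.M1.emeasure_space_1 PP.M2.emeasure_space_1 space_pair_measure)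

definition "Cp = (\<integral>\<^sup>+z. ennreal (max 0 (c z)) \<partial>\<pi>s)"
definition "Cn = (\<integral>\<^sup>+z. ennreal (max 0 (- c z)) \<partial>\<pi>s)"

lemma fin_parts: "Cp \<noteq> \<top> \<and> Cn \<noteq> \<top> \<and> \<bar>rel_entropy \<pi>s M\<bar> \<noteq> \<infinity>"
proof -
  have "\<bar>enn2ereal Cp - enn2ereal Cn + rel_entropy \<pi>s M\<bar> \<noteq> \<infinity>"
    using fin by (simp add: entropic_cost_def Cp_def Cn_def)
  from ereal_fin3[OF enn2ereal_nonneg enn2ereal_nonneg this] show ?thesis by simp
qed

lemma ac_pi: "absolutely_continuous M \<pi>s"
proof (rule ccontr)
  assume "\<not> absolutely_continuous M \<pi>s"
  then have "rel_entropy \<pi>s M = \<infinity>" by (simp add: rel_entropy_def)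
  then show False using fin_parts by simp
qed

lemma int_c: "integrable \<pi>s c"
  using fin_parts by (intro integrable_from_parts) (auto simp: Cp_def Cn_def less_top)

definition "fr z = enn2real (RN_deriv M \<pi>s z)"
definition "ell z = ln (fr z)"
lemma fr_meas[measurable]: "fr \<in> borel_measurable M" unfolding fr_def by measurable
lemma ell_meas[measurable]: "ell \<in> borel_measurable M" unfolding ell_def by measurable
lemma ell_pi[measurable]: "ell \<in> borel_measurable \<pi>s" unfolding meas_pi by (rule ell_meas)

lemma R_eq: "rel_entropy \<pi>s M = Ient \<pi>s ell"
  unfolding ell_def fr_def by (rule rel_entropy_eq[OF sets_pi ac_pi])

lemma int_ell: "integrable \<pi>s ell"
proof -
  have f: "\<bar>Ient \<pi>s ell\<bar> \<noteq> \<infinity>" using fin_parts R_eq by simp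
  have p: "(\<integral>\<^sup>+z. ennreal (max 0 (ell z)) \<partial>\<pi>s) < \<infinity>"
  proof (rule ccontr)
    assume "\<not> (\<integral>\<^sup>+z. ennreal (max 0 (ell z)) \<partial>\<pi>s) < \<infinity>"
    then have "(\<integral>\<^sup>+z. ennreal (max 0 (ell z)) \<partial>\<pi>s) = \<infinity>" by (metis infinity_ennreal_def top.not_eq_extremum)
    then have "Ient \<pi>s ell = \<infinity>" by (rule Ient_top)
    then show False using f by simp
  qed
  have n: "(\<integral>\<^sup>+z. ennreal (max 0 (- ell z)) \<partial>\<pi>s) < \<infinity>"
  proof (rule ccontr)
    assume "\<not> (\<integral>\<^sup>+z. ennreal (max 0 (- ell z)) \<partial>\<pi>s) < \<infinity>"
    then have "(\<integral>\<^sup>+z. ennreal (max 0 (- ell z)) \<partial>\<pi>s) = \<infinity>" by (metis infinity_ennreal_def top.not_eq_extremum)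
    then have "Ient \<pi>s ell = - \<infinity>" by (rule Ient_bot[OF p])
    then show False using f by simp
  qed
  show ?thesis using p n by (intro integrable_from_parts) auto
qed

lemma pi_dens: "\<pi>s = density M (\<lambda>z. ennreal (fr z))"
proof -
  have sf: "sigma_finite_measure \<pi>s" using prob_pi by (rule prob_space_imp_sigma_finite)
  have "AE z in M. RN_deriv M \<pi>s z \<noteq> \<infinity>" by (rule PP.RN_deriv_finite[OF sf ac_pi sets_pi])
  then have ae: "AE z in M. RN_deriv M \<pi>s z = ennreal (fr z)"
  proof eventually_elim
    case (elim z) then show ?case unfolding fr_def by (cases "RN_deriv M \<pi>s z" rule: ennreal_cases) auto
  qed
  have "density M (RN_deriv M \<pi>s) = density M (\<lambda>z. ennreal (fr z))"
    by (rule density_cong[OF _ _ ae]) measurable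
  then show ?thesis using PP.density_RN_deriv[OF ac_pi sets_pi] by simp
qed

lemma fr_pos: "AE z in \<pi>s. fr z > 0"
proof -
  have "AE z in density M (\<lambda>z. ennreal (fr z)). fr z > 0"
    by (subst AE_density) (auto intro!: AE_I2)
  then show ?thesis by (simp only: pi_dens[symmetric])
qed

lemma nn_fst: assumes [measurable]: "g \<in> borel_measurable \<mu>"
  shows "(\<integral>\<^sup>+z. g (fst z) \<partial>\<pi>s) = (\<integral>\<^sup>+x. g x \<partial>\<mu>)"
proof -
  have "integral\<^sup>N (distr \<pi>s \<mu> fst) g = (\<integral>\<^sup>+z. g (fst z) \<partial>\<pi>s)"
    by (rule nn_integral_distr[OF fst_pi]) (simp add: marg1)
  then show ?thesis by (simp add: marg1)
qed

lemma nn_snd: assumes [measurable]: "g \<in> borel_measurable \<nu>"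
  shows "(\<integral>\<^sup>+z. g (snd z) \<partial>\<pi>s) = (\<integral>\<^sup>+y. g y \<partial>\<nu>)"
proof -
  have "integral\<^sup>N (distr \<pi>s \<nu> snd) g = (\<integral>\<^sup>+z. g (snd z) \<partial>\<pi>s)"
    by (rule nn_integral_distr[OF snd_pi]) (simp add: marg2)
  then show ?thesis by (simp add: marg2)
qed

lemma int_fst: fixes h :: "'a \<Rightarrow> real" assumes "integrable \<mu> h"
  shows "integrable \<pi>s (\<lambda>z. h (fst z))" "(\<integral>z. h (fst z) \<partial>\<pi>s) = (\<integral>x. h x \<partial>\<mu>)"
proof -
  have hm: "h \<in> borel_measurable \<mu>" using assms by (rule borel_measurable_integrable)
  show "integrable \<pi>s (\<lambda>z. h (fst z))"
    using integrable_distr_eq[OF fst_pi hm] assms by (simp add: marg1)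
  show "(\<integral>z. h (fst z) \<partial>\<pi>s) = (\<integral>x. h x \<partial>\<mu>)"
    using integral_distr[OF fst_pi hm] by (simp add: marg1)
qed

lemma int_snd: fixes h :: "'b \<Rightarrow> real" assumes "integrable \<nu> h"
  shows "integrable \<pi>s (\<lambda>z. h (snd z))" "(\<integral>z. h (snd z) \<partial>\<pi>s) = (\<integral>y. h y \<partial>\<nu>)"
proof -
  have hm: "h \<in> borel_measurable \<nu>" using assms by (rule borel_measurable_integrable)
  show "integrable \<pi>s (\<lambda>z. h (snd z))"
    using integrable_distr_eq[OF snd_pi hm] assms by (simp add: marg2)
  show "(\<integral>z. h (snd z) \<partial>\<pi>s) = (\<integral>y. h y \<partial>\<nu>)"
    using integral_distr[OF snd_pi hm] by (simp add: marg2)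
qed

lemma pos_int:
  assumes w[measurable]: "w \<in> borel_measurable M" and e: "(\<integral>\<^sup>+z. ennreal (exp (w z)) \<partial>M) \<le> 1"
  shows "(\<integral>\<^sup>+z. ennreal (max 0 (w z + c z)) \<partial>\<pi>s) < \<infinity>"
proof -
  have wpi[measurable]: "w \<in> borel_measurable \<pi>s" unfolding meas_pi by (rule w)
  have "(\<integral>\<^sup>+z. ennreal (exp (w z - ell z)) \<partial>\<pi>s) = (\<integral>\<^sup>+z. ennreal (exp (w z - ell z)) \<partial>density M (\<lambda>z. ennreal (fr z)))"
    by (simp only: pi_dens[symmetric])
  also have "\<dots> = (\<integral>\<^sup>+z. ennreal (fr z) * ennreal (exp (w z - ell z)) \<partial>M)" by (rule nn_integral_density) measurable
  also have "\<dots> \<le> (\<integral>\<^sup>+z. ennreal (exp (w z)) \<partial>M)"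
  proof (rule nn_integral_mono)
    fix z
    have fr0: "fr z \<ge> 0" by (simp add: fr_def)
    have eq: "ennreal (fr z) * ennreal (exp (w z - ell z)) = ennreal (fr z * exp (w z - ell z))"
      by (rule ennreal_mult[symmetric]) (auto simp: fr0)
    have "fr z * exp (w z - ell z) \<le> exp (w z)"
    proof (cases "fr z > 0")
      case True then show ?thesis by (simp add: ell_def exp_diff)
    next
      case False then have "fr z = 0" using fr0 by simp
      then show ?thesis by simp
    qed
    then show "ennreal (fr z) * ennreal (exp (w z - ell z)) \<le> ennreal (exp (w z))"
      unfolding eq by (rule ennreal_leI)
  qed
  also have "\<dots> \<le> 1" by (rule e)
  finally have e2: "(\<integral>\<^sup>+z. ennreal (exp (w z - ell z)) \<partial>\<pi>s) \<le> 1" .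
  have a: "(\<integral>\<^sup>+z. ennreal (max 0 (w z - ell z)) \<partial>\<pi>s) < \<infinity>"
    by (rule exp_bound) (use e2 in \<open>auto intro: le_less_trans\<close>)
  have b: "(\<integral>\<^sup>+z. ennreal (max 0 (ell z)) \<partial>\<pi>s) < \<infinity>"
    using int_ell unfolding real_integrable_def emax0 by (auto simp: less_top)
  have cc: "(\<integral>\<^sup>+z. ennreal (max 0 (c z)) \<partial>\<pi>s) < \<infinity>" using fin_parts by (simp add: Cp_def less_top)
  have "(\<integral>\<^sup>+z. ennreal (max 0 (w z + c z)) \<partial>\<pi>s)
      \<le> (\<integral>\<^sup>+z. ennreal (max 0 (w z - ell z)) + (ennreal (max 0 (ell z)) + ennreal (max 0 (c z))) \<partial>\<pi>s)"
    by (intro nn_integral_mono max0_le3) simp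
  also have "\<dots> < \<infinity>" by (rule sum3_fin) (use a b cc in auto)
  finally show ?thesis .
qed

lemma pos_even: "(\<integral>\<^sup>+z. ennreal (max 0 (phi t (fst z) + psi t (snd z))) \<partial>\<pi>s) < \<infinity>"
proof -
  have eq: "(\<lambda>z. ennreal (exp (phi t (fst z) + psi t (snd z) - c z))) = ea t"
    by (auto simp: ea_def split_beta fun_eq_iff)
  have "(\<integral>\<^sup>+z. ennreal (max 0 ((phi t (fst z) + psi t (snd z) - c z) + c z)) \<partial>\<pi>s) < \<infinity>"
    by (rule pos_int) (simp_all add: eq ea_total)
  then show ?thesis by simp
qed

lemma pos_odd: "(\<integral>\<^sup>+z. ennreal (max 0 (phi (Suc t) (fst z) + psi t (snd z))) \<partial>\<pi>s) < \<infinity>"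
proof -
  have eq: "(\<lambda>z. ennreal (exp (phi (Suc t) (fst z) + psi t (snd z) - c z))) = eo t"
    by (auto simp: eo_def split_beta fun_eq_iff)
  have "(\<integral>\<^sup>+z. ennreal (max 0 ((phi (Suc t) (fst z) + psi t (snd z) - c z) + c z)) \<partial>\<pi>s) < \<infinity>"
    by (rule pos_int) (simp_all add: eq eo_total)
  then show ?thesis by simp
qed

lemma negpart: "integrable N f \<Longrightarrow> (\<integral>\<^sup>+x. ennreal (max 0 (- f x)) \<partial>N) < \<infinity>"
  unfolding real_integrable_def emax0 by (auto simp: less_top)
lemma pospart: "integrable N f \<Longrightarrow> (\<integral>\<^sup>+x. ennreal (max 0 (f x)) \<partial>N) < \<infinity>"
  unfolding real_integrable_def emax0 by (auto simp: less_top)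

lemma psi_part:
  assumes ip: "integrable \<mu> (phi t)" and n: "(\<integral>\<^sup>+y. ennreal (max 0 (- psi t y)) \<partial>\<nu>) < \<infinity>"
  shows "integrable \<nu> (psi t)"
proof (rule integrable_from_parts)
  have "(\<integral>\<^sup>+y. ennreal (max 0 (psi t y)) \<partial>\<nu>) = (\<integral>\<^sup>+z. ennreal (max 0 (psi t (snd z))) \<partial>\<pi>s)"
    by (rule nn_snd[symmetric]) measurable
  also have "\<dots> \<le> (\<integral>\<^sup>+z. ennreal (max 0 (phi t (fst z) + psi t (snd z))) + ennreal (max 0 (- phi t (fst z))) \<partial>\<pi>s)"
    by (intro nn_integral_mono max0_le) simp
  also have "\<dots> < \<infinity>"
  proof (rule sum2_fin)
    show "(\<integral>\<^sup>+z. ennreal (max 0 (- phi t (fst z))) \<partial>\<pi>s) < \<infinity>"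
      using negpart[OF ip] nn_fst[of "\<lambda>x. ennreal (max 0 (- phi t x))"] by simp
  qed (use pos_even[of t] in auto)
  finally show "(\<integral>\<^sup>+y. ennreal (max 0 (psi t y)) \<partial>\<nu>) < \<infinity>" .
qed (use n in auto)

lemma phi_part:
  assumes ip: "integrable \<mu> (phi t)" and ps: "integrable \<nu> (psi t)"
  shows "integrable \<mu> (phi (Suc t))"
proof (rule integrable_from_parts)
  have "(\<integral>\<^sup>+x. ennreal (max 0 (phi (Suc t) x)) \<partial>\<mu>) = (\<integral>\<^sup>+z. ennreal (max 0 (phi (Suc t) (fst z))) \<partial>\<pi>s)"
    by (rule nn_fst[symmetric]) measurable
  also have "\<dots> \<le> (\<integral>\<^sup>+z. ennreal (max 0 (phi (Suc t) (fst z) + psi t (snd z))) + ennreal (max 0 (- psi t (snd z))) \<partial>\<pi>s)"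
    by (intro nn_integral_mono max0_le) simp
  also have "\<dots> < \<infinity>"
  proof (rule sum2_fin)
    show "(\<integral>\<^sup>+z. ennreal (max 0 (- psi t (snd z))) \<partial>\<pi>s) < \<infinity>"
      using negpart[OF ps] nn_snd[of "\<lambda>y. ennreal (max 0 (- psi t y))"] by simp
  qed (use pos_odd[of t] in auto)
  finally show "(\<integral>\<^sup>+x. ennreal (max 0 (phi (Suc t) x)) \<partial>\<mu>) < \<infinity>" .
next
  have a: "(\<integral>\<^sup>+x. ennreal (max 0 (phi t x - phi (Suc t) x)) \<partial>\<mu>) < \<infinity>"
    by (rule exp_bound) (simp_all add: mu_tot)
  have "(\<integral>\<^sup>+x. ennreal (max 0 (- phi (Suc t) x)) \<partial>\<mu>)
      \<le> (\<integral>\<^sup>+x. ennreal (max 0 (phi t x - phi (Suc t) x)) + ennreal (max 0 (- phi t x)) \<partial>\<mu>)"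
    by (intro nn_integral_mono max0_le) simp
  also have "\<dots> < \<infinity>" by (rule sum2_fin) (use a negpart[OF ip] in auto)
  finally show "(\<integral>\<^sup>+x. ennreal (max 0 (- phi (Suc t) x)) \<partial>\<mu>) < \<infinity>" .
qed simp

lemma psi_neg_Suc:
  assumes ps: "integrable \<nu> (psi t)"
  shows "(\<integral>\<^sup>+y. ennreal (max 0 (- psi (Suc t) y)) \<partial>\<nu>) < \<infinity>"
proof -
  have a: "(\<integral>\<^sup>+y. ennreal (max 0 (psi t y - psi (Suc t) y)) \<partial>\<nu>) < \<infinity>"
    by (rule exp_bound) (simp_all add: nu_tot)
  have "(\<integral>\<^sup>+y. ennreal (max 0 (- psi (Suc t) y)) \<partial>\<nu>)
      \<le> (\<integral>\<^sup>+y. ennreal (max 0 (psi t y - psi (Suc t) y)) + ennreal (max 0 (- psi t y)) \<partial>\<nu>)"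
    by (intro nn_integral_mono max0_le) simp
  also have "\<dots> < \<infinity>" by (rule sum2_fin) (use a negpart[OF ps] in auto)
  finally show ?thesis .
qed

lemma psi_neg_0: "(\<integral>\<^sup>+y. ennreal (max 0 (- psi 0 y)) \<partial>\<nu>) < \<infinity>"
proof (rule exp_bound)
  have fin: "(\<integral>\<^sup>+z. ennreal (exp (- c z)) \<partial>M) < \<infinity>"
    using ic unfolding real_integrable_def by (auto simp: less_top)
  have "(\<integral>\<^sup>+y. Z 0 y \<partial>\<nu>) = (\<integral>\<^sup>+y. \<integral>\<^sup>+x. ennreal (exp (- c (x, y))) \<partial>\<mu> \<partial>\<nu>)"
    unfolding Z_def by simp
  also have "\<dots> = (\<integral>\<^sup>+z. ennreal (exp (- c z)) \<partial>M)"
    by (rule PP.nn_integral_snd) measurable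
  finally have fZ: "(\<integral>\<^sup>+y. Z 0 y \<partial>\<nu>) < \<infinity>" using fin by simp
  have "(\<integral>\<^sup>+y. ennreal (exp (- psi 0 y)) \<partial>\<nu>) = (\<integral>\<^sup>+y. Z 0 y \<partial>\<nu>)"
  proof (rule nn_integral_cong_AE)
    show "AE y in \<nu>. ennreal (exp (- psi 0 y)) = Z 0 y"
      using Zpf[of 0] unfolding Zpf_def
    proof eventually_elim
      case (elim y)
      then have "enn2real (Z 0 y) > 0" by (simp add: enn2real_positive_iff less_top[symmetric] zero_less_iff_neq_zero)
      moreover have "ennreal (enn2real (Z 0 y)) = Z 0 y" using elim by (cases "Z 0 y" rule: ennreal_cases) auto
      ultimately show ?case by (simp add: psi_eq)
    qed
  qed
  then show "(\<integral>\<^sup>+y. ennreal (exp (- psi 0 y)) \<partial>\<nu>) < \<infinity>" using fZ by simp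
qed measurable

lemma ints: "integrable \<mu> (phi t) \<and> integrable \<nu> (psi t)"
proof (induction t)
  case 0
  have "integrable \<mu> (phi 0)" by simp
  then show ?case using psi_part[OF _ psi_neg_0] by simp
next
  case (Suc t)
  then have "integrable \<mu> (phi (Suc t))" using phi_part by blast
  then show ?case using psi_part[OF _ psi_neg_Suc] Suc by blast
qed

lemma H_pi: "rel_entropy \<pi>s (sk_pi_even \<mu> \<nu> c t)
   = ereal ((\<integral>z. ell z \<partial>\<pi>s) - (\<integral>x. phi t x \<partial>\<mu>) - (\<integral>y. psi t y \<partial>\<nu>) + (\<integral>z. c z \<partial>\<pi>s))"
proof -
  define p where "p z = exp (phi t (fst z) + psi t (snd z) - c z)" for z
  have pm[measurable]: "p \<in> borel_measurable M" unfolding p_def by measurable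
  have pe: "sk_pi_even \<mu> \<nu> c t = density M (\<lambda>z. ennreal (p z))"
    unfolding pi_even by (rule arg_cong[where f="density M"]) (auto simp: ea_def p_def split_beta fun_eq_iff)
  have fm: "finite_measure (density M (\<lambda>z. ennreal (p z)))"
    using prob_space.finite_measure[OF prob_even[of t]] pe pi_even by simp
  have "rel_entropy \<pi>s (sk_pi_even \<mu> \<nu> c t) = rel_entropy (density M (\<lambda>z. ennreal (fr z))) (density M (\<lambda>z. ennreal (p z)))"
    unfolding pe by (subst pi_dens) (rule refl)
  also have "\<dots> = Ient (density M (\<lambda>z. ennreal (fr z))) (\<lambda>z. ln (fr z / p z))"
    by (rule rel_entropy_density[OF pm fr_meas _ _ fm]) (auto simp: p_def fr_def)
  also have "\<dots> = Ient \<pi>s (\<lambda>z. ell z - (phi t (fst z) + psi t (snd z) - c z))"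
    unfolding pi_dens[symmetric]
    by (rule Ient_cong_AE) (use fr_pos in \<open>eventually_elim, simp add: ell_def ln_div p_def\<close>)
  also have iA: "integrable \<pi>s (\<lambda>z. phi t (fst z))" using ints[of t] int_fst(1) by blast
  have iB: "integrable \<pi>s (\<lambda>z. psi t (snd z))" using ints[of t] int_snd(1) by blast
  have iAB: "integrable \<pi>s (\<lambda>z. phi t (fst z) + psi t (snd z))" by (rule Bochner_Integration.integrable_add[OF iA iB])
  have iABc: "integrable \<pi>s (\<lambda>z. phi t (fst z) + psi t (snd z) - c z)" by (rule Bochner_Integration.integrable_diff[OF iAB int_c])
  have iall: "integrable \<pi>s (\<lambda>z. ell z - (phi t (fst z) + psi t (snd z) - c z))"
    by (rule Bochner_Integration.integrable_diff[OF int_ell iABc])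
  have "Ient \<pi>s (\<lambda>z. ell z - (phi t (fst z) + psi t (snd z) - c z)) = ereal (\<integral>z. ell z - (phi t (fst z) + psi t (snd z) - c z) \<partial>\<pi>s)"
    by (rule Ient_integrable[OF iall])
  also have "(\<integral>z. ell z - (phi t (fst z) + psi t (snd z) - c z) \<partial>\<pi>s)
      = (\<integral>z. ell z \<partial>\<pi>s) - (\<integral>z. phi t (fst z) + psi t (snd z) - c z \<partial>\<pi>s)"
    by (rule Bochner_Integration.integral_diff[OF int_ell iABc])
  also have "(\<integral>z. phi t (fst z) + psi t (snd z) - c z \<partial>\<pi>s) = (\<integral>z. phi t (fst z) + psi t (snd z) \<partial>\<pi>s) - (\<integral>z. c z \<partial>\<pi>s)"
    by (rule Bochner_Integration.integral_diff[OF iAB int_c])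
  also have "(\<integral>z. phi t (fst z) + psi t (snd z) \<partial>\<pi>s) = (\<integral>z. phi t (fst z) \<partial>\<pi>s) + (\<integral>z. psi t (snd z) \<partial>\<pi>s)"
    by (rule Bochner_Integration.integral_add[OF iA iB])
  also have "(\<integral>z. phi t (fst z) \<partial>\<pi>s) = (\<integral>x. phi t x \<partial>\<mu>)" using ints[of t] int_fst(2) by blast
  also have "(\<integral>z. psi t (snd z) \<partial>\<pi>s) = (\<integral>y. psi t y \<partial>\<nu>)" using ints[of t] int_snd(2) by blast
  finally show ?thesis by simp
qed

lemma part1: "rel_entropy \<pi>s (sk_pi_even \<mu> \<nu> c (Suc t)) - rel_entropy \<pi>s (sk_pi_even \<mu> \<nu> c t)
     = - (rel_entropy \<mu> (sk_mu_even \<mu> \<nu> c t) + rel_entropy \<nu> (sk_nu_odd \<mu> \<nu> c t))"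
proof -
  have i0: "integrable \<mu> (phi t)" "integrable \<nu> (psi t)" using ints[of t] by auto
  have i1: "integrable \<mu> (phi (Suc t))" "integrable \<nu> (psi (Suc t))" using ints[of "Suc t"] by auto
  have a: "rel_entropy \<mu> (sk_mu_even \<mu> \<nu> c t) = ereal ((\<integral>x. phi (Suc t) x \<partial>\<mu>) - (\<integral>x. phi t x \<partial>\<mu>))"
    unfolding H1 using i0 i1 by (subst Ient_integrable) auto
  have b: "rel_entropy \<nu> (sk_nu_odd \<mu> \<nu> c t) = ereal ((\<integral>y. psi (Suc t) y \<partial>\<nu>) - (\<integral>y. psi t y \<partial>\<nu>))"
    unfolding H2 using i0 i1 by (subst Ient_integrable) auto
  show ?thesis unfolding a b H_pi by simp
qed

end


theorem lemma4p2:
  fixes \<mu> :: "('a::polish_space) measure" and \<nu> :: "('b::polish_space) measure"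
    and c :: "'a \<times> 'b \<Rightarrow> real" and \<pi>s :: "('a \<times> 'b) measure" and t :: nat
  assumes "prob_space \<mu>" "sets \<mu> = sets borel"
    and "prob_space \<nu>" "sets \<nu> = sets borel"
    and "c \<in> borel_measurable (\<mu> \<Otimes>\<^sub>M \<nu>)"
    and "integrable (\<mu> \<Otimes>\<^sub>M \<nu>) (\<lambda>z. exp (- c z))"
    and "\<pi>s \<in> couplings \<mu> \<nu>"
    and "\<forall>\<pi> \<in> couplings \<mu> \<nu>. entropic_cost \<mu> \<nu> c \<pi>s \<le> entropic_cost \<mu> \<nu> c \<pi>"
    and "\<bar>entropic_cost \<mu> \<nu> c \<pi>s\<bar> \<noteq> \<infinity>"
  shows "rel_entropy \<pi>s (sk_pi_even \<mu> \<nu> c (Suc t)) - rel_entropy \<pi>s (sk_pi_even \<mu> \<nu> c t)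
           = - (rel_entropy \<mu> (sk_mu_even \<mu> \<nu> c t) + rel_entropy \<nu> (sk_nu_odd \<mu> \<nu> c t))
       \<and> - (rel_entropy \<mu> (sk_mu_even \<mu> \<nu> c t) + rel_entropy \<nu> (sk_nu_odd \<mu> \<nu> c t))
           \<le> - (rel_entropy (sk_mu_even \<mu> \<nu> c (Suc t)) \<mu> + rel_entropy \<mu> (sk_mu_even \<mu> \<nu> c (Suc t)))
       \<and> - (rel_entropy (sk_mu_even \<mu> \<nu> c (Suc t)) \<mu> + rel_entropy \<mu> (sk_mu_even \<mu> \<nu> c (Suc t)))
           \<le> - rel_entropy (sk_mu_even \<mu> \<nu> c (Suc t)) \<mu>"
proof -
  interpret sk_pi \<mu> \<nu> c \<pi>s
    using assms by (intro sk_pi.intro sk.intro sk_pi_axioms.intro) auto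
  show ?thesis using part1[of t] part23[of t] by (intro conjI)
qed

end
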